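(* Let $\mathbb{E}$ be a finitely complete category, $\Sigma$ a fibrational class of split epimorphisms, and suppose $\mathbb{E}$ is a $\Sigma$-Mal'tsev category. Let $R$ be a reflexive relation and $S$ a $\Sigma$-relation on an object $X$ with $[R,S]=0$, and let $p\colon R\times_XS\to X$ be a connector. Write, for generalized elements $x,y,z\colon T\to X$ with $xRy$ and $ySz$, $p(xRySz)$ for the corresponding composite $T\to X$. Then: (1) (coherence) for all such $x,y,z$ one has $x\,S\,p(xRySz)$ and $p(xRySz)\,R\,z$; (2) (left associativity) for all $x,y,z,t$ with $xRySzSt$, one has $p(p(xRySz)RzSt)=p(xRySt)$; (3) (right associativity) if moreover $R$ is a preorder, then for all $x,y,z,t$ with $xRyRzSt$, one has $p(xRySp(yRzSt))=p(xRzSt)$.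
   Context: A split epimorphism is a pair $(f,s)$ with $fs=1$. A class $\Sigma$ of split epimorphisms is fibrational if it contains all split epimorphisms $(f,s)$ with $f$ invertible and is stable under pullback along any morphism. A pair of morphisms with common codomain $Z$ is jointly extremally epic if it factors jointly through no non-invertible monomorphism into $Z$. $\mathbb{E}$ is $\Sigma$-Mal'tsev if for every split epimorphism $(f,s)\colon X\rightleftarrows Y$ in $\Sigma$ and every split epimorphism $(g,t)$ with $g\colon Y'\to Y$, letting $X'=Y'\times_YX$, $s'=(1_{Y'},sg)$, $\bar t=(tf,1_X)$, the pair $(s',\bar t)$ is jointly extremally epic. A $\Sigma$-relation is a reflexive relation $(d_0,d_1)\colon S\rightarrowtail X\times X$ with reflexivity $s_0$ such that $(d_0,s_0)\in\Sigma$ (such $S$ is automatically transitive in a $\Sigma$-Mal'tsev category). For reflexive relations $R,S$ on $X$, $R\times_XS$ is the pullback of $d_0^S$ along $d_1^R$ (elements $xRySz$), $\sigma_0^R\colon R\to R\times_XS$, $xRy\mapsto xRySy$, and $\sigma_0^S\colon S\to R\times_XS$, $ySz\mapsto yRySz$. $[R,S]=0$ means there is a morphism $p\colon R\times_XS\to X$ (a connector) with $p\sigma_0^R=d_0^R$ and $p\sigma_0^S=d_1^S$, i.e. $p(xRySy)=x$, $p(yRySz)=z$. A preorder is a reflexive transitive relation. *)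

theory Defs
  imports Main
begin

text \<open>An abstract category: objects of type 'o, arrows of type 'a.
  cmp C g f is the composite g after f.\<close>

record ('o, 'a) cat =
  Obj :: "'o set"
  Arr :: "'a set"
  Dom :: "'a \<Rightarrow> 'o"
  Cod :: "'a \<Rightarrow> 'o"
  cmp :: "'a \<Rightarrow> 'a \<Rightarrow> 'a"
  ident :: "'o \<Rightarrow> 'a"

definition hom :: "('o, 'a, 'e) cat_scheme \<Rightarrow> 'o \<Rightarrow> 'o \<Rightarrow> 'a set" where
  "hom C X Y = {f \<in> Arr C. Dom C f = X \<and> Cod C f = Y}"

definition category :: "('o, 'a, 'e) cat_scheme \<Rightarrow> bool" where
  "category C \<longleftrightarrow>
     (\<forall>f\<in>Arr C. Dom C f \<in> Obj C \<and> Cod C f \<in> Obj C) \<and>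
     (\<forall>X\<in>Obj C. ident C X \<in> hom C X X) \<and>
     (\<forall>f\<in>Arr C. \<forall>g\<in>Arr C. Cod C f = Dom C g \<longrightarrow> cmp C g f \<in> hom C (Dom C f) (Cod C g)) \<and>
     (\<forall>f\<in>Arr C. cmp C f (ident C (Dom C f)) = f \<and> cmp C (ident C (Cod C f)) f = f) \<and>
     (\<forall>f\<in>Arr C. \<forall>g\<in>Arr C. \<forall>h\<in>Arr C. Cod C f = Dom C g \<longrightarrow> Cod C g = Dom C h \<longrightarrow>
        cmp C h (cmp C g f) = cmp C (cmp C h g) f)"

definition mono :: "('o, 'a, 'e) cat_scheme \<Rightarrow> 'a \<Rightarrow> bool" where
  "mono C m \<longleftrightarrow> m \<in> Arr C \<and>
     (\<forall>u\<in>Arr C. \<forall>v\<in>Arr C. Cod C u = Dom C m \<longrightarrow> Cod C v = Dom C m \<longrightarrow> Dom C u = Dom C v \<longrightarrow>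
        cmp C m u = cmp C m v \<longrightarrow> u = v)"

definition iso :: "('o, 'a, 'e) cat_scheme \<Rightarrow> 'a \<Rightarrow> bool" where
  "iso C f \<longleftrightarrow> f \<in> Arr C \<and> (\<exists>g \<in> hom C (Cod C f) (Dom C f).
     cmp C g f = ident C (Dom C f) \<and> cmp C f g = ident C (Cod C f))"

definition is_pullback :: "('o, 'a, 'e) cat_scheme \<Rightarrow> 'a \<Rightarrow> 'a \<Rightarrow> 'o \<Rightarrow> 'a \<Rightarrow> 'a \<Rightarrow> bool" where
  "is_pullback C f g P p1 p2 \<longleftrightarrow>
     f \<in> Arr C \<and> g \<in> Arr C \<and> Cod C f = Cod C g \<and>
     p1 \<in> hom C P (Dom C f) \<and> p2 \<in> hom C P (Dom C g) \<and>
     cmp C f p1 = cmp C g p2 \<and>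
     (\<forall>T\<in>Obj C. \<forall>q1\<in>hom C T (Dom C f). \<forall>q2\<in>hom C T (Dom C g).
        cmp C f q1 = cmp C g q2 \<longrightarrow>
        (\<exists>!u. u \<in> hom C T P \<and> cmp C p1 u = q1 \<and> cmp C p2 u = q2))"

definition terminal :: "('o, 'a, 'e) cat_scheme \<Rightarrow> 'o \<Rightarrow> bool" where
  "terminal C I \<longleftrightarrow> I \<in> Obj C \<and> (\<forall>X\<in>Obj C. \<exists>!u. u \<in> hom C X I)"

definition finitely_complete :: "('o, 'a, 'e) cat_scheme \<Rightarrow> bool" where
  "finitely_complete C \<longleftrightarrow> (\<exists>I. terminal C I) \<and>
     (\<forall>f\<in>Arr C. \<forall>g\<in>Arr C. Cod C f = Cod C g \<longrightarrow> (\<exists>P p1 p2. is_pullback C f g P p1 p2))"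

definition split_epi :: "('o, 'a, 'e) cat_scheme \<Rightarrow> 'a \<Rightarrow> 'a \<Rightarrow> bool" where
  "split_epi C f s \<longleftrightarrow> f \<in> Arr C \<and> s \<in> hom C (Cod C f) (Dom C f) \<and>
     cmp C f s = ident C (Cod C f)"

definition fibrational :: "('o, 'a, 'e) cat_scheme \<Rightarrow> ('a \<times> 'a) set \<Rightarrow> bool" where
  "fibrational C \<Sigma> \<longleftrightarrow>
     (\<forall>(f, s)\<in>\<Sigma>. split_epi C f s) \<and>
     (\<forall>f s. split_epi C f s \<and> iso C f \<longrightarrow> (f, s) \<in> \<Sigma>) \<and>
     (\<forall>(f, s)\<in>\<Sigma>. \<forall>g\<in>Arr C. \<forall>P f' g' s'.
        Cod C g = Cod C f \<longrightarrow> is_pullback C g f P f' g' \<longrightarrow>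
        s' \<in> hom C (Dom C g) P \<longrightarrow> cmp C f' s' = ident C (Dom C g) \<longrightarrow>
        cmp C g' s' = cmp C s g \<longrightarrow> (f', s') \<in> \<Sigma>)"

definition jointly_extremally_epic :: "('o, 'a, 'e) cat_scheme \<Rightarrow> 'a \<Rightarrow> 'a \<Rightarrow> bool" where
  "jointly_extremally_epic C a b \<longleftrightarrow> a \<in> Arr C \<and> b \<in> Arr C \<and> Cod C a = Cod C b \<and>
     (\<forall>m a' b'. mono C m \<longrightarrow> Cod C m = Cod C a \<longrightarrow>
        a' \<in> hom C (Dom C a) (Dom C m) \<longrightarrow> b' \<in> hom C (Dom C b) (Dom C m) \<longrightarrow>
        cmp C m a' = a \<longrightarrow> cmp C m b' = b \<longrightarrow> iso C m)"

definition sigma_maltsev :: "('o, 'a, 'e) cat_scheme \<Rightarrow> ('a \<times> 'a) set \<Rightarrow> bool" where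
  "sigma_maltsev C \<Sigma> \<longleftrightarrow>
     (\<forall>(f, s)\<in>\<Sigma>. \<forall>g t P f' g' s' tb.
        split_epi C g t \<longrightarrow> Cod C g = Cod C f \<longrightarrow> is_pullback C g f P f' g' \<longrightarrow>
        s' \<in> hom C (Dom C g) P \<longrightarrow> cmp C f' s' = ident C (Dom C g) \<longrightarrow> cmp C g' s' = cmp C s g \<longrightarrow>
        tb \<in> hom C (Dom C f) P \<longrightarrow> cmp C f' tb = cmp C t f \<longrightarrow> cmp C g' tb = ident C (Dom C f) \<longrightarrow>
        jointly_extremally_epic C s' tb)"

text \<open>A reflexive relation (d0,d1) : R \<rightarrowtail> X \<times> X with reflexivity r0; the relation
  being a monomorphism into X \<times> X is expressed as (d0,d1) being jointly monic.\<close>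
definition reflexive_relation ::
  "('o, 'a, 'e) cat_scheme \<Rightarrow> 'o \<Rightarrow> 'o \<Rightarrow> 'a \<Rightarrow> 'a \<Rightarrow> 'a \<Rightarrow> bool" where
  "reflexive_relation C X R d0 d1 r0 \<longleftrightarrow>
     X \<in> Obj C \<and> R \<in> Obj C \<and> d0 \<in> hom C R X \<and> d1 \<in> hom C R X \<and> r0 \<in> hom C X R \<and>
     cmp C d0 r0 = ident C X \<and> cmp C d1 r0 = ident C X \<and>
     (\<forall>T\<in>Obj C. \<forall>u\<in>hom C T R. \<forall>v\<in>hom C T R.
        cmp C d0 u = cmp C d0 v \<longrightarrow> cmp C d1 u = cmp C d1 v \<longrightarrow> u = v)"

definition sigma_relation ::
  "('o, 'a, 'e) cat_scheme \<Rightarrow> ('a \<times> 'a) set \<Rightarrow> 'o \<Rightarrow> 'o \<Rightarrow> 'a \<Rightarrow> 'a \<Rightarrow> 'a \<Rightarrow> bool" where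
  "sigma_relation C \<Sigma> X S d0 d1 s0 \<longleftrightarrow> reflexive_relation C X S d0 d1 s0 \<and> (d0, s0) \<in> \<Sigma>"

definition witnesses ::
  "('o, 'a, 'e) cat_scheme \<Rightarrow> 'o \<Rightarrow> 'a \<Rightarrow> 'a \<Rightarrow> 'o \<Rightarrow> 'a \<Rightarrow> 'a \<Rightarrow> 'a \<Rightarrow> bool" where
  "witnesses C R d0 d1 T x y r \<longleftrightarrow> r \<in> hom C T R \<and> cmp C d0 r = x \<and> cmp C d1 r = y"

definition relates ::
  "('o, 'a, 'e) cat_scheme \<Rightarrow> 'o \<Rightarrow> 'a \<Rightarrow> 'a \<Rightarrow> 'o \<Rightarrow> 'a \<Rightarrow> 'a \<Rightarrow> bool" where
  "relates C R d0 d1 T x y \<longleftrightarrow> (\<exists>r. witnesses C R d0 d1 T x y r)"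

definition preorder_rel ::
  "('o, 'a, 'e) cat_scheme \<Rightarrow> 'o \<Rightarrow> 'o \<Rightarrow> 'a \<Rightarrow> 'a \<Rightarrow> 'a \<Rightarrow> bool" where
  "preorder_rel C X R d0 d1 r0 \<longleftrightarrow> reflexive_relation C X R d0 d1 r0 \<and>
     (\<forall>T\<in>Obj C. \<forall>x\<in>hom C T X. \<forall>y\<in>hom C T X. \<forall>z\<in>hom C T X.
        relates C R d0 d1 T x y \<longrightarrow> relates C R d0 d1 T y z \<longrightarrow> relates C R d0 d1 T x z)"

definition is_connector ::
  "('o, 'a, 'e) cat_scheme \<Rightarrow> 'o \<Rightarrow> 'o \<Rightarrow> 'a \<Rightarrow> 'a \<Rightarrow> 'a \<Rightarrow> 'o \<Rightarrow> 'a \<Rightarrow> 'a \<Rightarrow> 'a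
     \<Rightarrow> 'o \<Rightarrow> 'a \<Rightarrow> 'a \<Rightarrow> 'a \<Rightarrow> bool" where
  "is_connector C X R d0R d1R r0 S d0S d1S s0 P pr1 pr2 p \<longleftrightarrow>
     is_pullback C d1R d0S P pr1 pr2 \<and> p \<in> hom C P X \<and>
     (\<forall>\<sigma>. \<sigma> \<in> hom C R P \<longrightarrow> cmp C pr1 \<sigma> = ident C R \<longrightarrow> cmp C pr2 \<sigma> = cmp C s0 d1R \<longrightarrow>
        cmp C p \<sigma> = d0R) \<and>
     (\<forall>\<sigma>. \<sigma> \<in> hom C S P \<longrightarrow> cmp C pr1 \<sigma> = cmp C r0 d0S \<longrightarrow> cmp C pr2 \<sigma> = ident C S \<longrightarrow>
        cmp C p \<sigma> = d1S)"

text \<open>p(xRySz) for r : T \<rightarrow> R, s : T \<rightarrow> S witnessing xRy and ySz.\<close>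
definition conn_app ::
  "('o, 'a, 'e) cat_scheme \<Rightarrow> 'o \<Rightarrow> 'a \<Rightarrow> 'a \<Rightarrow> 'a \<Rightarrow> 'o \<Rightarrow> 'a \<Rightarrow> 'a \<Rightarrow> 'a" where
  "conn_app C P pr1 pr2 p T r s =
     cmp C p (THE u. u \<in> hom C T P \<and> cmp C pr1 u = r \<and> cmp C pr2 u = s)"

end

theory Submission
  imports Defs
begin

locale cctx = fixes C :: "('o,'a,'e) cat_scheme" assumes cat: "category C"
begin

abbreviation c (infixr "\<cdot>" 55) where "g \<cdot> f \<equiv> cmp C g f"

lemma hom_iff: "f \<in> hom C A B \<longleftrightarrow> f \<in> Arr C \<and> Dom C f = A \<and> Cod C f = B"
  by (simp add: hom_def)

lemma dom_obj[simp]: "f \<in> Arr C \<Longrightarrow> Dom C f \<in> Obj C"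
  using cat unfolding category_def by blast
lemma cod_obj[simp]: "f \<in> Arr C \<Longrightarrow> Cod C f \<in> Obj C"
  using cat unfolding category_def by blast
lemma id_arr[simp]: "X \<in> Obj C \<Longrightarrow> ident C X \<in> Arr C"
  using cat unfolding category_def hom_def by blast
lemma id_dom[simp]: "X \<in> Obj C \<Longrightarrow> Dom C (ident C X) = X"
  using cat unfolding category_def hom_def by blast
lemma id_cod[simp]: "X \<in> Obj C \<Longrightarrow> Cod C (ident C X) = X"
  using cat unfolding category_def hom_def by blast
lemma comp_arr[simp]: "f \<in> Arr C \<Longrightarrow> g \<in> Arr C \<Longrightarrow> Cod C f = Dom C g \<Longrightarrow> g \<cdot> f \<in> Arr C"
  using cat unfolding category_def hom_def by blast
lemma comp_dom[simp]: "f \<in> Arr C \<Longrightarrow> g \<in> Arr C \<Longrightarrow> Cod C f = Dom C g \<Longrightarrow> Dom C (g \<cdot> f) = Dom C f"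
  using cat unfolding category_def hom_def by blast
lemma comp_cod[simp]: "f \<in> Arr C \<Longrightarrow> g \<in> Arr C \<Longrightarrow> Cod C f = Dom C g \<Longrightarrow> Cod C (g \<cdot> f) = Cod C g"
  using cat unfolding category_def hom_def by blast
lemma idl[simp]: "f \<in> Arr C \<Longrightarrow> Cod C f = Y \<Longrightarrow> ident C Y \<cdot> f = f"
  using cat unfolding category_def by blast
lemma idr[simp]: "f \<in> Arr C \<Longrightarrow> Dom C f = Y \<Longrightarrow> f \<cdot> ident C Y = f"
  using cat unfolding category_def by blast
lemma assoc[simp]: "f \<in> Arr C \<Longrightarrow> g \<in> Arr C \<Longrightarrow> h \<in> Arr C \<Longrightarrow> Cod C f = Dom C g \<Longrightarrow> Cod C g = Dom C h \<Longrightarrow>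
   (h \<cdot> g) \<cdot> f = h \<cdot> (g \<cdot> f)"
proof -
  assume a: "f \<in> Arr C" "g \<in> Arr C" "h \<in> Arr C" "Cod C f = Dom C g" "Cod C g = Dom C h"
  have "\<forall>f\<in>Arr C. \<forall>g\<in>Arr C. \<forall>h\<in>Arr C. Cod C f = Dom C g \<longrightarrow> Cod C g = Dom C h \<longrightarrow>
        cmp C h (cmp C g f) = cmp C (cmp C h g) f" using cat unfolding category_def by blast
  then have "h \<cdot> (g \<cdot> f) = (h \<cdot> g) \<cdot> f" using a by blast
  then show ?thesis by simp
qed

lemma comp_hom: "f \<in> hom C A B \<Longrightarrow> g \<in> hom C B D \<Longrightarrow> g \<cdot> f \<in> hom C A D"
  by (simp add: hom_iff)

lemma assoc_eq: "g \<cdot> f = h \<Longrightarrow> x \<in> Arr C \<Longrightarrow> f \<in> Arr C \<Longrightarrow> g \<in> Arr C \<Longrightarrow> Cod C x = Dom C f \<Longrightarrow> Cod C f = Dom C g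
   \<Longrightarrow> g \<cdot> (f \<cdot> x) = h \<cdot> x"
  using assoc[of x f g] by simp

lemma pb_basic:
  assumes "is_pullback C f g P p1 p2"
  shows "f \<in> Arr C" "g \<in> Arr C" "Cod C f = Cod C g" "p1 \<in> Arr C" "p2 \<in> Arr C"
    "Dom C p1 = P" "Dom C p2 = P" "Cod C p1 = Dom C f" "Cod C p2 = Dom C g" "f \<cdot> p1 = g \<cdot> p2"
  using assms unfolding is_pullback_def hom_def by auto

lemma pb_ex:
  assumes "is_pullback C f g P p1 p2" "q1 \<in> hom C T (Dom C f)" "q2 \<in> hom C T (Dom C g)" "f \<cdot> q1 = g \<cdot> q2"
  obtains u where "u \<in> hom C T P" "p1 \<cdot> u = q1" "p2 \<cdot> u = q2"
proof -
  have "T \<in> Obj C" using assms(2) by (metis dom_obj hom_iff)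
  then show ?thesis using assms that unfolding is_pullback_def by blast
qed

lemma pb_uniq:
  assumes pb: "is_pullback C f g P p1 p2" and u: "u \<in> hom C T P" and v: "v \<in> hom C T P"
    and "p1 \<cdot> u = p1 \<cdot> v" "p2 \<cdot> u = p2 \<cdot> v"
  shows "u = v"
proof -
  note b = pb_basic[OF pb]
  have T: "T \<in> Obj C" using u by (metis dom_obj hom_iff)
  have q1: "p1 \<cdot> u \<in> hom C T (Dom C f)" using u b(4,6,8) by (simp add: hom_iff)
  have q2: "p2 \<cdot> u \<in> hom C T (Dom C g)" using u b(5,7,9) by (simp add: hom_iff)
  have eq: "f \<cdot> (p1 \<cdot> u) = g \<cdot> (p2 \<cdot> u)"
  proof -
    have "f \<cdot> (p1 \<cdot> u) = (f \<cdot> p1) \<cdot> u" using u b(1,4,6,8) assoc[of u p1 f] by (simp add: hom_iff)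
    also have "\<dots> = (g \<cdot> p2) \<cdot> u" using b(10) by simp
    also have "\<dots> = g \<cdot> (p2 \<cdot> u)" using u b(2,5,7,9) assoc[of u p2 g] by (simp add: hom_iff)
    finally show ?thesis .
  qed
  have "\<exists>!w. w \<in> hom C T P \<and> p1 \<cdot> w = p1 \<cdot> u \<and> p2 \<cdot> w = p2 \<cdot> u"
    using pb T q1 q2 eq unfolding is_pullback_def by blast
  then obtain w where w: "\<And>y. y \<in> hom C T P \<and> p1 \<cdot> y = p1 \<cdot> u \<and> p2 \<cdot> y = p2 \<cdot> u \<Longrightarrow> y = w"
    by blast
  have "u = w" using w[of u] u by simp
  moreover have "v = w" using w[of v] v assms(4,5) by simp
  ultimately show ?thesis by simp
qed

lemma conn_app_eq:
  assumes pb: "is_pullback C d1R d0S P pr1 pr2" and u: "u \<in> hom C T P" "pr1 \<cdot> u = r" "pr2 \<cdot> u = s"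
  shows "conn_app C P pr1 pr2 p T r s = p \<cdot> u"
proof -
  have "(THE v. v \<in> hom C T P \<and> pr1 \<cdot> v = r \<and> pr2 \<cdot> v = s) = u"
  proof (rule the_equality)
    show "u \<in> hom C T P \<and> pr1 \<cdot> u = r \<and> pr2 \<cdot> u = s" using u by simp
    fix v assume v: "v \<in> hom C T P \<and> pr1 \<cdot> v = r \<and> pr2 \<cdot> v = s"
    have a: "v \<in> hom C T P" "pr1 \<cdot> v = pr1 \<cdot> u" "pr2 \<cdot> v = pr2 \<cdot> u" using v u by auto
    show "v = u" by (rule pb_uniq[OF pb a(1) u(1) a(2,3)])
  qed
  then show ?thesis unfolding conn_app_def by simp
qed

end

context cctx begin

lemma term_uniq: "terminal C I \<Longrightarrow> u \<in> hom C T I \<Longrightarrow> v \<in> hom C T I \<Longrightarrow> u = v"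
  unfolding terminal_def by (metis dom_obj hom_iff)

lemma extremal_factor:
  assumes fc: "finitely_complete C"
    and jee: "jointly_extremally_epic C e1 e2"
    and A: "Cod C e1 = A"
    and u0: "u0 \<in> hom C E X" and u1: "u1 \<in> hom C E X"
    and jm: "\<forall>T\<in>Obj C. \<forall>u\<in>hom C T E. \<forall>v\<in>hom C T E. u0 \<cdot> u = u0 \<cdot> v \<longrightarrow> u1 \<cdot> u = u1 \<cdot> v \<longrightarrow> u = v"
    and a: "a \<in> hom C A X" and b: "b \<in> hom C A X"
    and w1: "w1 \<in> hom C (Dom C e1) E" "u0 \<cdot> w1 = a \<cdot> e1" "u1 \<cdot> w1 = b \<cdot> e1"
    and w2: "w2 \<in> hom C (Dom C e2) E" "u0 \<cdot> w2 = a \<cdot> e2" "u1 \<cdot> w2 = b \<cdot> e2"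
  obtains w where "w \<in> hom C A E" "u0 \<cdot> w = a" "u1 \<cdot> w = b"
proof -
  have e: "e1 \<in> Arr C" "e2 \<in> Arr C" "Cod C e2 = A"
    using jee A unfolding jointly_extremally_epic_def by auto
  obtain I where I: "terminal C I" using fc unfolding finitely_complete_def by blast
  have X: "X \<in> Obj C" using a by (metis cod_obj hom_iff)
  obtain uX where uX: "uX \<in> hom C X I" using I X unfolding terminal_def by blast
  obtain X2 \<pi>1 \<pi>2 where pbX: "is_pullback C uX uX X2 \<pi>1 \<pi>2"
    using fc uX unfolding finitely_complete_def hom_def by blast
  have \<pi>: "\<pi>1 \<in> hom C X2 X" "\<pi>2 \<in> hom C X2 X" using pb_basic[OF pbX] uX by (auto simp: hom_iff)
  have pair: "\<exists>m. m \<in> hom C T X2 \<and> \<pi>1 \<cdot> m = q1 \<and> \<pi>2 \<cdot> m = q2"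
    if "q1 \<in> hom C T X" "q2 \<in> hom C T X" for T q1 q2
  proof -
    have "uX \<cdot> q1 = uX \<cdot> q2" using term_uniq[OF I] comp_hom[OF that(1) uX] comp_hom[OF that(2) uX] by blast
    then show ?thesis using pb_ex[OF pbX] that uX by (metis hom_iff)
  qed
  obtain m0 where m0: "m0 \<in> hom C E X2" "\<pi>1 \<cdot> m0 = u0" "\<pi>2 \<cdot> m0 = u1" using pair[OF u0 u1] by blast
  obtain n where n: "n \<in> hom C A X2" "\<pi>1 \<cdot> n = a" "\<pi>2 \<cdot> n = b" using pair[OF a b] by blast
  have "n \<in> Arr C" "m0 \<in> Arr C" "Cod C n = Cod C m0" using n m0 by (auto simp: hom_iff)
  then obtain M mA mE where pbM: "is_pullback C n m0 M mA mE"
    using fc unfolding finitely_complete_def by blast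
  note bM = pb_basic[OF pbM]
  have mA: "mA \<in> hom C M A" and mE: "mE \<in> hom C M E" and nm: "n \<cdot> mA = m0 \<cdot> mE"
    using bM n m0 by (auto simp: hom_iff)
  note ar = mA[unfolded hom_iff] mE[unfolded hom_iff] n(1)[unfolded hom_iff] m0(1)[unfolded hom_iff]
    \<pi>[unfolded hom_iff] a[unfolded hom_iff] b[unfolded hom_iff] u0[unfolded hom_iff] u1[unfolded hom_iff]
  note ar' = ar[THEN conjunct1] ar[THEN conjunct2, THEN conjunct1] ar[THEN conjunct2, THEN conjunct2]
  have proj: "u0 \<cdot> (mE \<cdot> x) = a \<cdot> (mA \<cdot> x)" "u1 \<cdot> (mE \<cdot> x) = b \<cdot> (mA \<cdot> x)"
    if "x \<in> Arr C" "Cod C x = M" for x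
  proof -
    have "u0 \<cdot> (mE \<cdot> x) = (\<pi>1 \<cdot> m0) \<cdot> (mE \<cdot> x)" using m0 by simp
    also have "\<dots> = \<pi>1 \<cdot> ((m0 \<cdot> mE) \<cdot> x)" using ar' that by simp
    also have "\<dots> = \<pi>1 \<cdot> ((n \<cdot> mA) \<cdot> x)" using nm by simp
    also have "\<dots> = (\<pi>1 \<cdot> n) \<cdot> (mA \<cdot> x)" using ar' that by simp
    finally show "u0 \<cdot> (mE \<cdot> x) = a \<cdot> (mA \<cdot> x)" using n by simp
    have "u1 \<cdot> (mE \<cdot> x) = (\<pi>2 \<cdot> m0) \<cdot> (mE \<cdot> x)" using m0 by simp
    also have "\<dots> = \<pi>2 \<cdot> ((m0 \<cdot> mE) \<cdot> x)" using ar' that by simp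
    also have "\<dots> = \<pi>2 \<cdot> ((n \<cdot> mA) \<cdot> x)" using nm by simp
    also have "\<dots> = (\<pi>2 \<cdot> n) \<cdot> (mA \<cdot> x)" using ar' that by simp
    finally show "u1 \<cdot> (mE \<cdot> x) = b \<cdot> (mA \<cdot> x)" using n by simp
  qed
  have mono: "mono C mA"
    unfolding mono_def
  proof (intro conjI ballI impI)
    show "mA \<in> Arr C" using ar' by simp
    fix u v assume uv: "u \<in> Arr C" "v \<in> Arr C" "Cod C u = Dom C mA" "Cod C v = Dom C mA"
      "Dom C u = Dom C v" "mA \<cdot> u = mA \<cdot> v"
    have uM: "Cod C u = M" "Cod C v = M" using uv ar' by auto
    have h1: "mE \<cdot> u \<in> hom C (Dom C u) E" "mE \<cdot> v \<in> hom C (Dom C u) E"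
      using uv uM ar' by (auto simp: hom_iff)
    have "mE \<cdot> u = mE \<cdot> v"
      using jm[rule_format, OF dom_obj[OF uv(1)] h1] proj[OF uv(1) uM(1)] proj[OF uv(2) uM(2)] uv(6) by simp
    moreover have "u \<in> hom C (Dom C u) M" "v \<in> hom C (Dom C u) M" using uv uM by (auto simp: hom_iff)
    ultimately show "u = v" using pb_uniq[OF pbM] uv(6) by blast
  qed
  have fac: "\<exists>h. h \<in> hom C (Dom C e) M \<and> mA \<cdot> h = e"
     if ee: "e \<in> Arr C" "Cod C e = A" "w \<in> hom C (Dom C e) E" "u0 \<cdot> w = a \<cdot> e" "u1 \<cdot> w = b \<cdot> e" for e w
  proof -
    have eh: "e \<in> hom C (Dom C e) A" using ee by (simp add: hom_iff)
    have eq: "n \<cdot> e = m0 \<cdot> w"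
    proof (rule pb_uniq[OF pbX])
      show "n \<cdot> e \<in> hom C (Dom C e) X2" by (rule comp_hom[OF eh n(1)])
      show "m0 \<cdot> w \<in> hom C (Dom C e) X2" by (rule comp_hom[OF ee(3) m0(1)])
      have "\<pi>1 \<cdot> (n \<cdot> e) = (\<pi>1 \<cdot> n) \<cdot> e" "\<pi>1 \<cdot> (m0 \<cdot> w) = (\<pi>1 \<cdot> m0) \<cdot> w"
           "\<pi>2 \<cdot> (n \<cdot> e) = (\<pi>2 \<cdot> n) \<cdot> e" "\<pi>2 \<cdot> (m0 \<cdot> w) = (\<pi>2 \<cdot> m0) \<cdot> w"
        using ar' ee by (auto simp: hom_iff)
      then show "\<pi>1 \<cdot> (n \<cdot> e) = \<pi>1 \<cdot> (m0 \<cdot> w)" "\<pi>2 \<cdot> (n \<cdot> e) = \<pi>2 \<cdot> (m0 \<cdot> w)"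
        using n m0 ee by simp_all
    qed
    have eh2: "e \<in> hom C (Dom C e) (Dom C n)" "w \<in> hom C (Dom C e) (Dom C m0)"
      using eh ee(3) ar' by auto
    obtain h where "h \<in> hom C (Dom C e) M" "mA \<cdot> h = e"
      by (rule pb_ex[OF pbM eh2 eq])
    then show ?thesis by blast
  qed
  obtain h1 where h1: "h1 \<in> hom C (Dom C e1) M" "mA \<cdot> h1 = e1" using fac[OF e(1) A w1] by blast
  obtain h2 where h2: "h2 \<in> hom C (Dom C e2) M" "mA \<cdot> h2 = e2" using fac[OF e(2) e(3) w2] by blast
  have "iso C mA"
    using jee mono h1 h2 ar' A unfolding jointly_extremally_epic_def by metis
  then obtain j where j: "j \<in> hom C A M" "mA \<cdot> j = ident C A"
    unfolding iso_def using ar' by auto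
  have jj: "j \<in> Arr C" "Cod C j = M" "Dom C j = A" using j by (auto simp: hom_iff)
  show ?thesis
  proof (rule that[of "mE \<cdot> j"])
    show "mE \<cdot> j \<in> hom C A E" by (rule comp_hom[OF j(1) mE])
    show "u0 \<cdot> (mE \<cdot> j) = a" using proj(1)[OF jj(1,2)] j(2) ar' by simp
    show "u1 \<cdot> (mE \<cdot> j) = b" using proj(2)[OF jj(1,2)] j(2) ar' by simp
  qed
qed

lemma extremal_eq:
  assumes fc: "finitely_complete C"
    and jee: "jointly_extremally_epic C e1 e2" and A: "Cod C e1 = A"
    and a: "a \<in> hom C A X" and b: "b \<in> hom C A X"
    and "a \<cdot> e1 = b \<cdot> e1" "a \<cdot> e2 = b \<cdot> e2"
  shows "a = b"
proof -
  have e: "e1 \<in> Arr C" "e2 \<in> Arr C" "Cod C e2 = A"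
    using jee A unfolding jointly_extremally_epic_def by auto
  have X: "X \<in> Obj C" using a by (metis cod_obj hom_iff)
  have i: "ident C X \<in> hom C X X" using X by (simp add: hom_iff)
  have jm: "\<forall>T\<in>Obj C. \<forall>u\<in>hom C T X. \<forall>v\<in>hom C T X. ident C X \<cdot> u = ident C X \<cdot> v \<longrightarrow> ident C X \<cdot> u = ident C X \<cdot> v \<longrightarrow> u = v"
    by (auto simp: hom_iff)
  have w1: "a \<cdot> e1 \<in> hom C (Dom C e1) X" "ident C X \<cdot> (a \<cdot> e1) = a \<cdot> e1" "ident C X \<cdot> (a \<cdot> e1) = b \<cdot> e1"
    using a b e A assms(6) by (auto simp: hom_iff)
  have w2: "a \<cdot> e2 \<in> hom C (Dom C e2) X" "ident C X \<cdot> (a \<cdot> e2) = a \<cdot> e2" "ident C X \<cdot> (a \<cdot> e2) = b \<cdot> e2"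
    using a b e A assms(7) by (auto simp: hom_iff)
  obtain w where "w \<in> hom C A X" "ident C X \<cdot> w = a" "ident C X \<cdot> w = b"
    using extremal_factor[OF fc jee A i i jm a b w1 w2] by blast
  then show ?thesis by (auto simp: hom_iff)
qed

end


lemma pb_the:
  assumes "cctx C" "is_pullback C f g P p1 p2" "q1 \<in> hom C T (Dom C f)" "q2 \<in> hom C T (Dom C g)" "cmp C f q1 = cmp C g q2"
  shows "(THE u. u \<in> hom C T P \<and> cmp C p1 u = q1 \<and> cmp C p2 u = q2) \<in> hom C T P \<and>
     cmp C p1 (THE u. u \<in> hom C T P \<and> cmp C p1 u = q1 \<and> cmp C p2 u = q2) = q1 \<and>
     cmp C p2 (THE u. u \<in> hom C T P \<and> cmp C p1 u = q1 \<and> cmp C p2 u = q2) = q2"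
proof -
  interpret cctx C by fact
  obtain u where u: "u \<in> hom C T P" "p1 \<cdot> u = q1" "p2 \<cdot> u = q2" using pb_ex[OF assms(2-5)] by blast
  have "(THE u. u \<in> hom C T P \<and> cmp C p1 u = q1 \<and> cmp C p2 u = q2) = u"
  proof (rule the_equality)
    show "u \<in> hom C T P \<and> p1 \<cdot> u = q1 \<and> p2 \<cdot> u = q2" using u by simp
    fix v assume v: "v \<in> hom C T P \<and> p1 \<cdot> v = q1 \<and> p2 \<cdot> v = q2"
    have a: "v \<in> hom C T P" "p1 \<cdot> v = p1 \<cdot> u" "p2 \<cdot> v = p2 \<cdot> u" using v u by auto
    show "v = u" by (rule pb_uniq[OF assms(2) a(1) u(1) a(2,3)])
  qed
  then show ?thesis using u by simp
qed

lemma malt_use: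
  assumes "sigma_maltsev C \<Sigma>" "(f, s) \<in> \<Sigma>" "split_epi C g t" "Cod C g = Cod C f" "is_pullback C g f Q f' g'"
   "s' \<in> hom C (Dom C g) Q" "cmp C f' s' = ident C (Dom C g)" "cmp C g' s' = cmp C s g"
   "tb \<in> hom C (Dom C f) Q" "cmp C f' tb = cmp C t f" "cmp C g' tb = ident C (Dom C f)"
  shows "jointly_extremally_epic C s' tb"
proof -
  have "\<forall>g t P f' g' s' tb.
        split_epi C g t \<longrightarrow> Cod C g = Cod C f \<longrightarrow> is_pullback C g f P f' g' \<longrightarrow>
        s' \<in> hom C (Dom C g) P \<longrightarrow> cmp C f' s' = ident C (Dom C g) \<longrightarrow> cmp C g' s' = cmp C s g \<longrightarrow>
        tb \<in> hom C (Dom C f) P \<longrightarrow> cmp C f' tb = cmp C t f \<longrightarrow> cmp C g' tb = ident C (Dom C f) \<longrightarrow>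
        jointly_extremally_epic C s' tb"
    using assms(1,2) unfolding sigma_maltsev_def by fast
  then show ?thesis using assms(3-) by blast
qed

lemma fib_use:
  assumes "fibrational C \<Sigma>" "(f, s) \<in> \<Sigma>" "g \<in> Arr C" "Cod C g = Cod C f" "is_pullback C g f Q f' g'"
   "s' \<in> hom C (Dom C g) Q" "cmp C f' s' = ident C (Dom C g)" "cmp C g' s' = cmp C s g"
  shows "(f', s') \<in> \<Sigma>"
proof -
  have "\<forall>g\<in>Arr C. \<forall>P f' g' s'.
        Cod C g = Cod C f \<longrightarrow> is_pullback C g f P f' g' \<longrightarrow>
        s' \<in> hom C (Dom C g) P \<longrightarrow> cmp C f' s' = ident C (Dom C g) \<longrightarrow>
        cmp C g' s' = cmp C s g \<longrightarrow> (f', s') \<in> \<Sigma>"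
    using assms(1,2) unfolding fibrational_def by fast
  then show ?thesis using assms(3-) by blast
qed

locale setting = cctx C for C :: "('o,'a,'e) cat_scheme" +
  fixes \<Sigma> :: "('a \<times> 'a) set" and X R d0R d1R r0 S d0S d1S s0 P pr1 pr2 p
  assumes fc: "finitely_complete C"
    and fib: "fibrational C \<Sigma>"
    and malt: "sigma_maltsev C \<Sigma>"
    and Rrel: "reflexive_relation C X R d0R d1R r0"
    and Srel: "sigma_relation C \<Sigma> X S d0S d1S s0"
    and conn: "is_connector C X R d0R d1R r0 S d0S d1S s0 P pr1 pr2 p"
begin

lemma objs[simp]: "X \<in> Obj C" "R \<in> Obj C" "S \<in> Obj C" "P \<in> Obj C"
  using Rrel Srel conn unfolding reflexive_relation_def sigma_relation_def is_connector_def
  by (auto dest: pb_basic simp: hom_iff)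

lemma pbP: "is_pullback C d1R d0S P pr1 pr2" using conn unfolding is_connector_def by blast

lemma arrs[simp]:
  "d0R \<in> Arr C" "Dom C d0R = R" "Cod C d0R = X"
  "d1R \<in> Arr C" "Dom C d1R = R" "Cod C d1R = X"
  "r0 \<in> Arr C" "Dom C r0 = X" "Cod C r0 = R"
  "d0S \<in> Arr C" "Dom C d0S = S" "Cod C d0S = X"
  "d1S \<in> Arr C" "Dom C d1S = S" "Cod C d1S = X"
  "s0 \<in> Arr C" "Dom C s0 = X" "Cod C s0 = S"
  "pr1 \<in> Arr C" "Dom C pr1 = P" "Cod C pr1 = R"
  "pr2 \<in> Arr C" "Dom C pr2 = P" "Cod C pr2 = S"
  "p \<in> Arr C" "Dom C p = P" "Cod C p = X"
  using Rrel Srel conn pb_basic[OF pbP] unfolding reflexive_relation_def sigma_relation_def is_connector_def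
  by (auto simp: hom_iff)

lemma refl_eqs[simp]: "d0R \<cdot> r0 = ident C X" "d1R \<cdot> r0 = ident C X" "d0S \<cdot> s0 = ident C X" "d1S \<cdot> s0 = ident C X"
  using Rrel Srel unfolding reflexive_relation_def sigma_relation_def by auto

lemma refl_eqs'[simp]: "x \<in> Arr C \<Longrightarrow> Cod C x = X \<Longrightarrow> d0R \<cdot> (r0 \<cdot> x) = x"
  "x \<in> Arr C \<Longrightarrow> Cod C x = X \<Longrightarrow> d1R \<cdot> (r0 \<cdot> x) = x"
  "x \<in> Arr C \<Longrightarrow> Cod C x = X \<Longrightarrow> d0S \<cdot> (s0 \<cdot> x) = x"
  "x \<in> Arr C \<Longrightarrow> Cod C x = X \<Longrightarrow> d1S \<cdot> (s0 \<cdot> x) = x"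
  by (simp_all add: assoc_eq[OF refl_eqs(1)] assoc_eq[OF refl_eqs(2)] assoc_eq[OF refl_eqs(3)] assoc_eq[OF refl_eqs(4)])

lemma pbP_eq[simp]: "d1R \<cdot> pr1 = d0S \<cdot> pr2" using pb_basic[OF pbP] by simp
lemma pbP_eq'[simp]: "x \<in> Arr C \<Longrightarrow> Cod C x = P \<Longrightarrow> d1R \<cdot> (pr1 \<cdot> x) = d0S \<cdot> (pr2 \<cdot> x)"
  by (simp add: assoc_eq[OF pbP_eq])

lemma jmR: "u \<in> Arr C \<Longrightarrow> v \<in> Arr C \<Longrightarrow> Cod C u = R \<Longrightarrow> Cod C v = R \<Longrightarrow> Dom C u = Dom C v \<Longrightarrow>
  d0R \<cdot> u = d0R \<cdot> v \<Longrightarrow> d1R \<cdot> u = d1R \<cdot> v \<Longrightarrow> u = v"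
  using Rrel unfolding reflexive_relation_def hom_def by (metis (mono_tags, lifting) dom_obj mem_Collect_eq)
lemma jmS: "u \<in> Arr C \<Longrightarrow> v \<in> Arr C \<Longrightarrow> Cod C u = S \<Longrightarrow> Cod C v = S \<Longrightarrow> Dom C u = Dom C v \<Longrightarrow>
  d0S \<cdot> u = d0S \<cdot> v \<Longrightarrow> d1S \<cdot> u = d1S \<cdot> v \<Longrightarrow> u = v"
  using Srel unfolding sigma_relation_def reflexive_relation_def hom_def by (metis (mono_tags, lifting) dom_obj mem_Collect_eq)

lemma pbP_uniq: "u \<in> Arr C \<Longrightarrow> v \<in> Arr C \<Longrightarrow> Cod C u = P \<Longrightarrow> Cod C v = P \<Longrightarrow> Dom C u = Dom C v \<Longrightarrow>
  pr1 \<cdot> u = pr1 \<cdot> v \<Longrightarrow> pr2 \<cdot> u = pr2 \<cdot> v \<Longrightarrow> u = v"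
  by (rule pb_uniq[OF pbP, of u "Dom C u" v]) (auto simp: hom_iff)

definition "sg1 = (THE u. u \<in> hom C R P \<and> pr1 \<cdot> u = ident C R \<and> pr2 \<cdot> u = s0 \<cdot> d1R)"
definition "sg2 = (THE u. u \<in> hom C S P \<and> pr1 \<cdot> u = r0 \<cdot> d0S \<and> pr2 \<cdot> u = ident C S)"

lemma sg1: "sg1 \<in> hom C R P \<and> pr1 \<cdot> sg1 = ident C R \<and> pr2 \<cdot> sg1 = s0 \<cdot> d1R"
  unfolding sg1_def by (rule pb_the[OF cctx_axioms pbP]) (auto simp: hom_iff)
lemma sg2: "sg2 \<in> hom C S P \<and> pr1 \<cdot> sg2 = r0 \<cdot> d0S \<and> pr2 \<cdot> sg2 = ident C S"
  unfolding sg2_def by (rule pb_the[OF cctx_axioms pbP]) (auto simp: hom_iff)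

lemma sg_arrs[simp]: "sg1 \<in> Arr C" "Dom C sg1 = R" "Cod C sg1 = P" "sg2 \<in> Arr C" "Dom C sg2 = S" "Cod C sg2 = P"
  using sg1 sg2 by (auto simp: hom_iff)

lemma sg_eqs[simp]: "pr1 \<cdot> sg1 = ident C R" "pr2 \<cdot> sg1 = s0 \<cdot> d1R" "pr1 \<cdot> sg2 = r0 \<cdot> d0S" "pr2 \<cdot> sg2 = ident C S"
  using sg1 sg2 by auto

lemma sg_eqs'[simp]:
  "x \<in> Arr C \<Longrightarrow> Cod C x = R \<Longrightarrow> pr1 \<cdot> (sg1 \<cdot> x) = x"
  "x \<in> Arr C \<Longrightarrow> Cod C x = R \<Longrightarrow> pr2 \<cdot> (sg1 \<cdot> x) = s0 \<cdot> (d1R \<cdot> x)"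
  "x \<in> Arr C \<Longrightarrow> Cod C x = S \<Longrightarrow> pr1 \<cdot> (sg2 \<cdot> x) = r0 \<cdot> (d0S \<cdot> x)"
  "x \<in> Arr C \<Longrightarrow> Cod C x = S \<Longrightarrow> pr2 \<cdot> (sg2 \<cdot> x) = x"
  by (simp_all add: assoc_eq[OF sg_eqs(1)] assoc_eq[OF sg_eqs(2)] assoc_eq[OF sg_eqs(3)] assoc_eq[OF sg_eqs(4)])

lemma p_sg[simp]: "p \<cdot> sg1 = d0R" "p \<cdot> sg2 = d1S"
  using conn sg1 sg2 unfolding is_connector_def by auto
lemma p_sg'[simp]: "x \<in> Arr C \<Longrightarrow> Cod C x = R \<Longrightarrow> p \<cdot> (sg1 \<cdot> x) = d0R \<cdot> x"
  "x \<in> Arr C \<Longrightarrow> Cod C x = S \<Longrightarrow> p \<cdot> (sg2 \<cdot> x) = d1S \<cdot> x"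
  by (simp_all add: assoc_eq[OF p_sg(1)] assoc_eq[OF p_sg(2)])

lemma gen1: "v \<in> Arr C \<Longrightarrow> Cod C v = P \<Longrightarrow> pr2 \<cdot> v = s0 \<cdot> (d1R \<cdot> (pr1 \<cdot> v)) \<Longrightarrow> p \<cdot> v = d0R \<cdot> (pr1 \<cdot> v)"
proof -
  assume v: "v \<in> Arr C" "Cod C v = P" "pr2 \<cdot> v = s0 \<cdot> (d1R \<cdot> (pr1 \<cdot> v))"
  have "v = sg1 \<cdot> (pr1 \<cdot> v)" by (rule pbP_uniq) (use v in simp_all)
  then have "p \<cdot> v = p \<cdot> (sg1 \<cdot> (pr1 \<cdot> v))" by simp
  then show ?thesis using v by simp
qed

lemma gen2: "v \<in> Arr C \<Longrightarrow> Cod C v = P \<Longrightarrow> pr1 \<cdot> v = r0 \<cdot> (d0S \<cdot> (pr2 \<cdot> v)) \<Longrightarrow> p \<cdot> v = d1S \<cdot> (pr2 \<cdot> v)"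
proof -
  assume v: "v \<in> Arr C" "Cod C v = P" "pr1 \<cdot> v = r0 \<cdot> (d0S \<cdot> (pr2 \<cdot> v))"
  have "v = sg2 \<cdot> (pr2 \<cdot> v)" by (rule pbP_uniq) (use v in simp_all)
  then have "p \<cdot> v = p \<cdot> (sg2 \<cdot> (pr2 \<cdot> v))" by simp
  then show ?thesis using v by simp
qed

lemma Sig: "(d0S, s0) \<in> \<Sigma>" using Srel unfolding sigma_relation_def by blast

lemma jee1: "jointly_extremally_epic C sg1 sg2"
proof -
  have se: "split_epi C d1R r0" unfolding split_epi_def by (simp add: hom_iff)
  show ?thesis by (rule malt_use[OF malt Sig se _ pbP]) (use sg1 sg2 in \<open>simp_all add: hom_iff\<close>)
qed

end

context setting begin

lemma jmS': "\<forall>T\<in>Obj C. \<forall>u\<in>hom C T S. \<forall>v\<in>hom C T S. d0S \<cdot> u = d0S \<cdot> v \<longrightarrow> d1S \<cdot> u = d1S \<cdot> v \<longrightarrow> u = v"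
  using jmS by (auto simp: hom_iff)
lemma jmR': "\<forall>T\<in>Obj C. \<forall>u\<in>hom C T R. \<forall>v\<in>hom C T R. d0R \<cdot> u = d0R \<cdot> v \<longrightarrow> d1R \<cdot> u = d1R \<cdot> v \<longrightarrow> u = v"
  using jmR by (auto simp: hom_iff)

lemma kS_ex: "\<exists>k. k \<in> hom C P S \<and> d0S \<cdot> k = d0R \<cdot> pr1 \<and> d1S \<cdot> k = p"
proof -
  have w1: "s0 \<cdot> d0R \<in> hom C (Dom C sg1) S" "d0S \<cdot> (s0 \<cdot> d0R) = (d0R \<cdot> pr1) \<cdot> sg1" "d1S \<cdot> (s0 \<cdot> d0R) = p \<cdot> sg1"
    by (simp_all add: hom_iff)
  have w2: "ident C S \<in> hom C (Dom C sg2) S" "d0S \<cdot> ident C S = (d0R \<cdot> pr1) \<cdot> sg2" "d1S \<cdot> ident C S = p \<cdot> sg2"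
    by (simp_all add: hom_iff)
  show ?thesis
    by (rule extremal_factor[OF fc jee1 _ _ _ jmS' _ _ w1 w2]) (auto simp: hom_iff)
qed

lemma kR_ex: "\<exists>k. k \<in> hom C P R \<and> d0R \<cdot> k = p \<and> d1R \<cdot> k = d1S \<cdot> pr2"
proof -
  have w1: "ident C R \<in> hom C (Dom C sg1) R" "d0R \<cdot> ident C R = p \<cdot> sg1" "d1R \<cdot> ident C R = (d1S \<cdot> pr2) \<cdot> sg1"
    by (simp_all add: hom_iff)
  have w2: "r0 \<cdot> d1S \<in> hom C (Dom C sg2) R" "d0R \<cdot> (r0 \<cdot> d1S) = p \<cdot> sg2" "d1R \<cdot> (r0 \<cdot> d1S) = (d1S \<cdot> pr2) \<cdot> sg2"
    by (simp_all add: hom_iff)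
  show ?thesis
    by (rule extremal_factor[OF fc jee1 _ _ _ jmR' _ _ w1 w2]) (auto simp: hom_iff)
qed

definition "kS = (SOME k. k \<in> hom C P S \<and> d0S \<cdot> k = d0R \<cdot> pr1 \<and> d1S \<cdot> k = p)"
definition "kR = (SOME k. k \<in> hom C P R \<and> d0R \<cdot> k = p \<and> d1R \<cdot> k = d1S \<cdot> pr2)"

lemma kS: "kS \<in> hom C P S \<and> d0S \<cdot> kS = d0R \<cdot> pr1 \<and> d1S \<cdot> kS = p"
  unfolding kS_def by (rule someI_ex[OF kS_ex])
lemma kR: "kR \<in> hom C P R \<and> d0R \<cdot> kR = p \<and> d1R \<cdot> kR = d1S \<cdot> pr2"
  unfolding kR_def by (rule someI_ex[OF kR_ex])

lemma k_arrs[simp]: "kS \<in> Arr C" "Dom C kS = P" "Cod C kS = S" "kR \<in> Arr C" "Dom C kR = P" "Cod C kR = R"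
  using kS kR by (auto simp: hom_iff)
lemma k_eqs[simp]: "d0S \<cdot> kS = d0R \<cdot> pr1" "d1S \<cdot> kS = p" "d0R \<cdot> kR = p" "d1R \<cdot> kR = d1S \<cdot> pr2"
  using kS kR by auto
lemma k_eqs'[simp]:
  "x \<in> Arr C \<Longrightarrow> Cod C x = P \<Longrightarrow> d0S \<cdot> (kS \<cdot> x) = d0R \<cdot> (pr1 \<cdot> x)"
  "x \<in> Arr C \<Longrightarrow> Cod C x = P \<Longrightarrow> d1S \<cdot> (kS \<cdot> x) = p \<cdot> x"
  "x \<in> Arr C \<Longrightarrow> Cod C x = P \<Longrightarrow> d0R \<cdot> (kR \<cdot> x) = p \<cdot> x"
  "x \<in> Arr C \<Longrightarrow> Cod C x = P \<Longrightarrow> d1R \<cdot> (kR \<cdot> x) = d1S \<cdot> (pr2 \<cdot> x)"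
  by (simp_all add: assoc_eq[OF k_eqs(1)] assoc_eq[OF k_eqs(2)] assoc_eq[OF k_eqs(3)] assoc_eq[OF k_eqs(4)])

definition "elt T r s = (THE u. u \<in> hom C T P \<and> pr1 \<cdot> u = r \<and> pr2 \<cdot> u = s)"

lemma elt:
  assumes "witnesses C R d0R d1R T x y r" "witnesses C S d0S d1S T y z s"
  shows "elt T r s \<in> Arr C" "Dom C (elt T r s) = T" "Cod C (elt T r s) = P"
    "pr1 \<cdot> elt T r s = r" "pr2 \<cdot> elt T r s = s"
    "conn_app C P pr1 pr2 p T r s = p \<cdot> elt T r s"
proof -
  have h: "elt T r s \<in> hom C T P \<and> pr1 \<cdot> elt T r s = r \<and> pr2 \<cdot> elt T r s = s"
    unfolding elt_def by (rule pb_the[OF cctx_axioms pbP]) (use assms in \<open>auto simp: witnesses_def hom_iff\<close>)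
  then show "elt T r s \<in> Arr C" "Dom C (elt T r s) = T" "Cod C (elt T r s) = P"
    "pr1 \<cdot> elt T r s = r" "pr2 \<cdot> elt T r s = s" by (auto simp: hom_iff)
  show "conn_app C P pr1 pr2 p T r s = p \<cdot> elt T r s"
    by (rule conn_app_eq[OF pbP]) (use h in auto)
qed

lemma part1:
  "\<forall>T\<in>Obj C. \<forall>x\<in>hom C T X. \<forall>y\<in>hom C T X. \<forall>z\<in>hom C T X. \<forall>r s.
        witnesses C R d0R d1R T x y r \<longrightarrow> witnesses C S d0S d1S T y z s \<longrightarrow>
        relates C S d0S d1S T x (conn_app C P pr1 pr2 p T r s) \<and>
        relates C R d0R d1R T (conn_app C P pr1 pr2 p T r s) z"
proof (intro ballI allI impI conjI)
  fix T x y z r s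
  assume w: "witnesses C R d0R d1R T x y r" "witnesses C S d0S d1S T y z s"
  note e = elt[OF w]
  have r: "d0R \<cdot> r = x" and s: "d1S \<cdot> s = z" using w by (auto simp: witnesses_def)
  show "relates C S d0S d1S T x (conn_app C P pr1 pr2 p T r s)"
    unfolding relates_def witnesses_def
    by (rule exI[of _ "kS \<cdot> elt T r s"]) (use e r in \<open>simp add: hom_iff\<close>)
  show "relates C R d0R d1R T (conn_app C P pr1 pr2 p T r s) z"
    unfolding relates_def witnesses_def
    by (rule exI[of _ "kR \<cdot> elt T r s"]) (use e s in \<open>simp add: hom_iff\<close>)
qed

end

context cctx begin
lemma pb_exI:
  assumes "is_pullback C f g P p1 p2" "q1 \<in> hom C T (Dom C f)" "q2 \<in> hom C T (Dom C g)" "f \<cdot> q1 = g \<cdot> q2"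
  shows "\<exists>u. u \<in> hom C T P \<and> p1 \<cdot> u = q1 \<and> p2 \<cdot> u = q2"
  using pb_ex[OF assms] by blast
end
context setting begin

lemma part2:
  "\<forall>T\<in>Obj C. \<forall>x\<in>hom C T X. \<forall>y\<in>hom C T X. \<forall>z\<in>hom C T X. \<forall>t\<in>hom C T X. \<forall>r s1 s2.
        witnesses C R d0R d1R T x y r \<longrightarrow> witnesses C S d0S d1S T y z s1 \<longrightarrow>
        witnesses C S d0S d1S T z t s2 \<longrightarrow>
        (\<exists>r' s'. witnesses C R d0R d1R T (conn_app C P pr1 pr2 p T r s1) z r' \<and>
                 witnesses C S d0S d1S T y t s' \<and>
                 conn_app C P pr1 pr2 p T r' s2 = conn_app C P pr1 pr2 p T r s')"
proof -
  obtain S2 q1 q2 where pbS2: "is_pullback C d1S d0S S2 q1 q2"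
    using fc unfolding finitely_complete_def by (metis arrs)
  note bS2 = pb_basic[OF pbS2]
  have qa: "q1 \<in> Arr C" "Dom C q1 = S2" "Cod C q1 = S" "q2 \<in> Arr C" "Dom C q2 = S2" "Cod C q2 = S"
    using bS2 by auto
  have S2o: "S2 \<in> Obj C" using dom_obj[OF qa(1)] qa(2) by simp
  note qa = qa S2o
  have qe: "d1S \<cdot> q1 = d0S \<cdot> q2" using bS2 by simp
  note qe' = qe assoc_eq[OF qe]
  have "\<exists>ss. ss \<in> hom C S S2 \<and> q1 \<cdot> ss = ident C S \<and> q2 \<cdot> ss = s0 \<cdot> d1S"
    by (rule pb_exI[OF pbS2]) (auto simp: hom_iff)
  then obtain ss where ss: "ss \<in> hom C S S2" "q1 \<cdot> ss = ident C S" "q2 \<cdot> ss = s0 \<cdot> d1S" by blast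
  have "\<exists>ts. ts \<in> hom C S S2 \<and> q1 \<cdot> ts = s0 \<cdot> d0S \<and> q2 \<cdot> ts = ident C S"
    by (rule pb_exI[OF pbS2]) (auto simp: hom_iff)
  then obtain ts where ts: "ts \<in> hom C S S2" "q1 \<cdot> ts = s0 \<cdot> d0S" "q2 \<cdot> ts = ident C S" by blast
  note ssa = ss(1)[unfolded hom_iff] ts(1)[unfolded hom_iff]
  note sse = ss(2,3) ts(2,3) assoc_eq[OF ss(2)] assoc_eq[OF ss(3)] assoc_eq[OF ts(2)] assoc_eq[OF ts(3)]
  have jeeS: "jointly_extremally_epic C ss ts"
    by (rule malt_use[OF malt Sig _ _ pbS2]) (use ss ts in \<open>simp_all add: split_epi_def hom_iff\<close>)
  have w1: "ident C S \<in> hom C (Dom C ss) S" "d0S \<cdot> ident C S = (d0S \<cdot> q1) \<cdot> ss" "d1S \<cdot> ident C S = (d1S \<cdot> q2) \<cdot> ss"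
    using qa ssa sse by (auto simp: hom_iff)
  have w2: "ident C S \<in> hom C (Dom C ts) S" "d0S \<cdot> ident C S = (d0S \<cdot> q1) \<cdot> ts" "d1S \<cdot> ident C S = (d1S \<cdot> q2) \<cdot> ts"
    using qa ssa sse by (auto simp: hom_iff)
  have "\<exists>\<tau>. \<tau> \<in> hom C S2 S \<and> d0S \<cdot> \<tau> = d0S \<cdot> q1 \<and> d1S \<cdot> \<tau> = d1S \<cdot> q2"
    by (rule extremal_factor[OF fc jeeS _ _ _ jmS' _ _ w1 w2]) (use qa ssa in \<open>auto simp: hom_iff\<close>)
  then obtain \<tau> where \<tau>: "\<tau> \<in> hom C S2 S" "d0S \<cdot> \<tau> = d0S \<cdot> q1" "d1S \<cdot> \<tau> = d1S \<cdot> q2" by blast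
  note \<tau>a = \<tau>(1)[unfolded hom_iff]
  note \<tau>e = \<tau>(2,3) assoc_eq[OF \<tau>(2)] assoc_eq[OF \<tau>(3)]
  have SigS: "(q1, ss) \<in> \<Sigma>"
    by (rule fib_use[OF fib Sig _ _ pbS2]) (use ss in \<open>simp_all add: hom_iff\<close>)
  obtain Q4 f4 g4 where pbQ: "is_pullback C pr2 q1 Q4 f4 g4"
    using fc qa unfolding finitely_complete_def by (metis arrs)
  note bQ = pb_basic[OF pbQ]
  have fga: "f4 \<in> Arr C" "Dom C f4 = Q4" "Cod C f4 = P" "g4 \<in> Arr C" "Dom C g4 = Q4" "Cod C g4 = S2"
    using bQ qa by auto
  have Q4o: "Q4 \<in> Obj C" using dom_obj[OF fga(1)] fga(2) by simp
  note fga = fga Q4o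
  have fge: "pr2 \<cdot> f4 = q1 \<cdot> g4" using bQ by simp
  note fge' = fge assoc_eq[OF fge]
  have "\<exists>s4. s4 \<in> hom C P Q4 \<and> f4 \<cdot> s4 = ident C P \<and> g4 \<cdot> s4 = ss \<cdot> pr2"
    by (rule pb_exI[OF pbQ]) (use qa ssa sse in \<open>simp_all add: hom_iff\<close>)
  then obtain s4 where s4: "s4 \<in> hom C P Q4" "f4 \<cdot> s4 = ident C P" "g4 \<cdot> s4 = ss \<cdot> pr2" by blast
  have "\<exists>t4. t4 \<in> hom C S2 Q4 \<and> f4 \<cdot> t4 = sg2 \<cdot> q1 \<and> g4 \<cdot> t4 = ident C S2"
    by (rule pb_exI[OF pbQ]) (use qa in \<open>simp_all add: hom_iff\<close>)
  then obtain t4 where t4: "t4 \<in> hom C S2 Q4" "f4 \<cdot> t4 = sg2 \<cdot> q1" "g4 \<cdot> t4 = ident C S2" by blast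
  note s4a = s4(1)[unfolded hom_iff] t4(1)[unfolded hom_iff]
  note s4e = s4(2,3) t4(2,3) assoc_eq[OF s4(2)] assoc_eq[OF s4(3)] assoc_eq[OF t4(2)] assoc_eq[OF t4(3)]
  have jee4: "jointly_extremally_epic C s4 t4"
    by (rule malt_use[OF malt SigS _ _ pbQ]) (use s4 t4 qa in \<open>simp_all add: split_epi_def hom_iff\<close>)
  have "\<exists>\<rho>. \<rho> \<in> hom C Q4 P \<and> pr1 \<cdot> \<rho> = kR \<cdot> f4 \<and> pr2 \<cdot> \<rho> = q2 \<cdot> g4"
    by (rule pb_exI[OF pbP]) (use fga qa fge' qe' in \<open>simp_all add: hom_iff\<close>)
  then obtain \<rho> where \<rho>: "\<rho> \<in> hom C Q4 P" "pr1 \<cdot> \<rho> = kR \<cdot> f4" "pr2 \<cdot> \<rho> = q2 \<cdot> g4" by blast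
  have "\<exists>\<rho>'. \<rho>' \<in> hom C Q4 P \<and> pr1 \<cdot> \<rho>' = pr1 \<cdot> f4 \<and> pr2 \<cdot> \<rho>' = \<tau> \<cdot> g4"
    by (rule pb_exI[OF pbP]) (use fga qa fge' \<tau>a \<tau>e in \<open>simp_all add: hom_iff\<close>)
  then obtain \<rho>' where \<rho>': "\<rho>' \<in> hom C Q4 P" "pr1 \<cdot> \<rho>' = pr1 \<cdot> f4" "pr2 \<cdot> \<rho>' = \<tau> \<cdot> g4" by blast
  note \<rho>a = \<rho>(1)[unfolded hom_iff] \<rho>'(1)[unfolded hom_iff]
  note \<rho>e = \<rho>(2,3) \<rho>'(2,3) assoc_eq[OF \<rho>(2)] assoc_eq[OF \<rho>(3)] assoc_eq[OF \<rho>'(2)] assoc_eq[OF \<rho>'(3)]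
  have \<tau>ss: "\<tau> \<cdot> ss = ident C S"
    by (rule jmS) (use \<tau>a ssa \<tau>e sse qa in simp_all)
  have kRsg2: "kR \<cdot> sg2 = r0 \<cdot> d1S"
    by (rule jmR) auto
  have eqs4: "(p \<cdot> \<rho>) \<cdot> s4 = (p \<cdot> \<rho>') \<cdot> s4"
  proof -
    have "p \<cdot> (\<rho> \<cdot> s4) = d0R \<cdot> (pr1 \<cdot> (\<rho> \<cdot> s4))"
      by (rule gen1) (use ssa \<tau>a \<rho>a s4a \<rho>e s4e fga qa sse in simp_all)
    also have "\<dots> = p" using ssa \<tau>a \<rho>a s4a \<rho>e s4e fga by simp
    finally have 1: "p \<cdot> (\<rho> \<cdot> s4) = p" .
    have "\<rho>' \<cdot> s4 = ident C P"
      by (rule pbP_uniq) (use ssa \<tau>a \<rho>a s4a \<rho>e s4e fga qa sse \<tau>a assoc_eq[OF \<tau>ss] in simp_all)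
    then show ?thesis using 1 \<rho>a s4a by simp
  qed
  have eqt4: "(p \<cdot> \<rho>) \<cdot> t4 = (p \<cdot> \<rho>') \<cdot> t4"
  proof -
    have "p \<cdot> (\<rho> \<cdot> t4) = d1S \<cdot> (pr2 \<cdot> (\<rho> \<cdot> t4))"
      by (rule gen2) (use ssa \<tau>a \<rho>a s4a \<rho>e s4e fga qa qe' assoc_eq[OF kRsg2] in simp_all)
    also have "\<dots> = d1S \<cdot> q2" using ssa \<tau>a \<rho>a s4a \<rho>e s4e fga qa by simp
    finally have 1: "p \<cdot> (\<rho> \<cdot> t4) = d1S \<cdot> q2" .
    have "p \<cdot> (\<rho>' \<cdot> t4) = d1S \<cdot> (pr2 \<cdot> (\<rho>' \<cdot> t4))"
      by (rule gen2) (use ssa \<tau>a \<rho>a s4a \<rho>e s4e fga qa \<tau>a \<tau>e in simp_all)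
    also have "\<dots> = d1S \<cdot> q2" using ssa \<tau>a \<rho>a s4a \<rho>e s4e fga qa \<tau>a \<tau>e by simp
    finally have 2: "p \<cdot> (\<rho>' \<cdot> t4) = d1S \<cdot> q2" .
    show ?thesis using 1 2 \<rho>a s4a by simp
  qed
  have main: "p \<cdot> \<rho> = p \<cdot> \<rho>'"
    by (rule extremal_eq[OF fc jee4 _ _ _ eqs4 eqt4]) (use ssa \<tau>a \<rho>a s4a in \<open>simp_all add: hom_iff\<close>)
  show ?thesis
  proof (intro ballI allI impI)
    fix T x y z t r s1 s2
    assume xyzt: "T \<in> Obj C" "x \<in> hom C T X" "y \<in> hom C T X" "z \<in> hom C T X" "t \<in> hom C T X"
    assume w: "witnesses C R d0R d1R T x y r" "witnesses C S d0S d1S T y z s1"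
      "witnesses C S d0S d1S T z t s2"
    note e = elt[OF w(1,2)]
    have ws: "s1 \<in> Arr C" "Dom C s1 = T" "Cod C s1 = S" "s2 \<in> Arr C" "Dom C s2 = T" "Cod C s2 = S"
      "r \<in> Arr C" "Dom C r = T" "Cod C r = R"
      "d0R \<cdot> r = x" "d1R \<cdot> r = y" "d0S \<cdot> s1 = y" "d1S \<cdot> s1 = z" "d0S \<cdot> s2 = z" "d1S \<cdot> s2 = t"
      using w by (auto simp: witnesses_def hom_iff)
    have "\<exists>v. v \<in> hom C T S2 \<and> q1 \<cdot> v = s1 \<and> q2 \<cdot> v = s2"
      by (rule pb_exI[OF pbS2]) (use ws in \<open>simp_all add: hom_iff\<close>)
    then obtain v where v: "v \<in> hom C T S2" "q1 \<cdot> v = s1" "q2 \<cdot> v = s2" by blast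
    note va = v(1)[unfolded hom_iff]
    have "\<exists>m. m \<in> hom C T Q4 \<and> f4 \<cdot> m = elt T r s1 \<and> g4 \<cdot> m = v"
      by (rule pb_exI[OF pbQ]) (use e v qa in \<open>simp_all add: hom_iff\<close>)
    then obtain m where m: "m \<in> hom C T Q4" "f4 \<cdot> m = elt T r s1" "g4 \<cdot> m = v" by blast
    note ma = m(1)[unfolded hom_iff]
    define r' where "r' = kR \<cdot> elt T r s1"
    define s' where "s' = \<tau> \<cdot> v"
    have wr': "witnesses C R d0R d1R T (conn_app C P pr1 pr2 p T r s1) z r'"
      unfolding r'_def witnesses_def using e ws by (simp add: hom_iff)
    have ws': "witnesses C S d0S d1S T y t s'"
      unfolding s'_def witnesses_def using qa va v \<tau>a \<tau>e ws by (simp add: hom_iff)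
    have c1: "conn_app C P pr1 pr2 p T r' s2 = p \<cdot> (\<rho> \<cdot> m)"
      by (rule conn_app_eq[OF pbP]) (use ssa \<tau>a \<rho>a ma \<rho>e m v va e fga qa in \<open>auto simp: hom_iff r'_def\<close>)
    have c2: "conn_app C P pr1 pr2 p T r s' = p \<cdot> (\<rho>' \<cdot> m)"
      by (rule conn_app_eq[OF pbP]) (use ssa \<tau>a \<rho>a ma \<rho>e m v va e fga qa \<tau>a in \<open>auto simp: hom_iff s'_def\<close>)
    have "p \<cdot> (\<rho> \<cdot> m) = p \<cdot> (\<rho>' \<cdot> m)"
      using main \<rho>a ma assoc[of m \<rho> p] assoc[of m \<rho>' p] by simp
    then show "\<exists>r' s'. witnesses C R d0R d1R T (conn_app C P pr1 pr2 p T r s1) z r' \<and>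
                 witnesses C S d0S d1S T y t s' \<and>
                 conn_app C P pr1 pr2 p T r' s2 = conn_app C P pr1 pr2 p T r s'"
      using wr' ws' c1 c2 by metis
  qed
qed

end

context setting begin

lemma part3:
  "preorder_rel C X R d0R d1R r0 \<longrightarrow>
      (\<forall>T\<in>Obj C. \<forall>x\<in>hom C T X. \<forall>y\<in>hom C T X. \<forall>z\<in>hom C T X. \<forall>t\<in>hom C T X. \<forall>r1 r2 s.
        witnesses C R d0R d1R T x y r1 \<longrightarrow> witnesses C R d0R d1R T y z r2 \<longrightarrow>
        witnesses C S d0S d1S T z t s \<longrightarrow>
        (\<exists>s' r'. witnesses C S d0S d1S T y (conn_app C P pr1 pr2 p T r2 s) s' \<and>
                 witnesses C R d0R d1R T x z r' \<and>
                 conn_app C P pr1 pr2 p T r1 s' = conn_app C P pr1 pr2 p T r' s))"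
proof
  assume pre: "preorder_rel C X R d0R d1R r0"
  obtain R2 m1 m2 where pbR2: "is_pullback C d1R d0R R2 m1 m2"
    using fc unfolding finitely_complete_def by (metis arrs)
  note bR2 = pb_basic[OF pbR2]
  have ma: "m1 \<in> Arr C" "Dom C m1 = R2" "Cod C m1 = R" "m2 \<in> Arr C" "Dom C m2 = R2" "Cod C m2 = R"
    using bR2 by auto
  have R2o: "R2 \<in> Obj C" using dom_obj[OF ma(1)] ma(2) by simp
  note ma = ma R2o
  have me: "d1R \<cdot> m1 = d0R \<cdot> m2" using bR2 by simp
  note me' = me assoc_eq[OF me]
  have "relates C R d0R d1R R2 (d0R \<cdot> m1) (d1R \<cdot> m2)"
  proof -
    have tr: "\<forall>T\<in>Obj C. \<forall>x\<in>hom C T X. \<forall>y\<in>hom C T X. \<forall>z\<in>hom C T X.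
        relates C R d0R d1R T x y \<longrightarrow> relates C R d0R d1R T y z \<longrightarrow> relates C R d0R d1R T x z"
      using pre unfolding preorder_rel_def by blast
    have 1: "relates C R d0R d1R R2 (d0R \<cdot> m1) (d1R \<cdot> m1)"
      unfolding relates_def witnesses_def using ma by (auto simp: hom_iff)
    have 2: "relates C R d0R d1R R2 (d1R \<cdot> m1) (d1R \<cdot> m2)"
      unfolding relates_def witnesses_def using ma me by (auto simp: hom_iff)
    have h: "d0R \<cdot> m1 \<in> hom C R2 X" "d1R \<cdot> m1 \<in> hom C R2 X" "d1R \<cdot> m2 \<in> hom C R2 X"
      using ma by (simp_all add: hom_iff)
    show ?thesis using tr R2o h 1 2 by blast
  qed
  then obtain \<mu> where \<mu>: "\<mu> \<in> hom C R2 R" "d0R \<cdot> \<mu> = d0R \<cdot> m1" "d1R \<cdot> \<mu> = d1R \<cdot> m2"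
    unfolding relates_def witnesses_def by blast
  note \<mu>a = \<mu>(1)[unfolded hom_iff]
  note \<mu>e = \<mu>(2,3) assoc_eq[OF \<mu>(2)] assoc_eq[OF \<mu>(3)]
  have SigP: "(pr1, sg1) \<in> \<Sigma>"
    by (rule fib_use[OF fib Sig _ _ pbP]) (simp_all add: hom_iff)
  have "\<exists>tR. tR \<in> hom C R R2 \<and> m1 \<cdot> tR = r0 \<cdot> d0R \<and> m2 \<cdot> tR = ident C R"
    by (rule pb_exI[OF pbR2]) (simp_all add: hom_iff)
  then obtain tR where tR: "tR \<in> hom C R R2" "m1 \<cdot> tR = r0 \<cdot> d0R" "m2 \<cdot> tR = ident C R" by blast
  note tRa = tR(1)[unfolded hom_iff]
  note tRe = tR(2,3) assoc_eq[OF tR(2)] assoc_eq[OF tR(3)]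
  obtain Q fQ gQ where pbQ: "is_pullback C m2 pr1 Q fQ gQ"
    using fc ma unfolding finitely_complete_def by (metis arrs)
  note bQ = pb_basic[OF pbQ]
  have fga: "fQ \<in> Arr C" "Dom C fQ = Q" "Cod C fQ = R2" "gQ \<in> Arr C" "Dom C gQ = Q" "Cod C gQ = P"
    using bQ ma by auto
  have Qo: "Q \<in> Obj C" using dom_obj[OF fga(1)] fga(2) by simp
  note fga = fga Qo
  have fge: "m2 \<cdot> fQ = pr1 \<cdot> gQ" using bQ by simp
  note fge' = fge assoc_eq[OF fge]
  have "\<exists>sQ. sQ \<in> hom C R2 Q \<and> fQ \<cdot> sQ = ident C R2 \<and> gQ \<cdot> sQ = sg1 \<cdot> m2"
    by (rule pb_exI[OF pbQ]) (use ma in \<open>simp_all add: hom_iff\<close>)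
  then obtain sQ where sQ: "sQ \<in> hom C R2 Q" "fQ \<cdot> sQ = ident C R2" "gQ \<cdot> sQ = sg1 \<cdot> m2" by blast
  have "\<exists>tQ. tQ \<in> hom C P Q \<and> fQ \<cdot> tQ = tR \<cdot> pr1 \<and> gQ \<cdot> tQ = ident C P"
    by (rule pb_exI[OF pbQ]) (use ma tRa tRe in \<open>simp_all add: hom_iff\<close>)
  then obtain tQ where tQ: "tQ \<in> hom C P Q" "fQ \<cdot> tQ = tR \<cdot> pr1" "gQ \<cdot> tQ = ident C P" by blast
  note sQa = sQ(1)[unfolded hom_iff] tQ(1)[unfolded hom_iff]
  note sQe = sQ(2,3) tQ(2,3) assoc_eq[OF sQ(2)] assoc_eq[OF sQ(3)] assoc_eq[OF tQ(2)] assoc_eq[OF tQ(3)]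
  have jeeQ: "jointly_extremally_epic C sQ tQ"
    by (rule malt_use[OF malt SigP _ _ pbQ]) (use sQ tQ ma tR in \<open>simp_all add: split_epi_def hom_iff\<close>)
  have "\<exists>lm. lm \<in> hom C Q P \<and> pr1 \<cdot> lm = m1 \<cdot> fQ \<and> pr2 \<cdot> lm = kS \<cdot> gQ"
    by (rule pb_exI[OF pbP]) (use fga ma fge' me' in \<open>simp_all add: hom_iff\<close>)
  then obtain lm where lm: "lm \<in> hom C Q P" "pr1 \<cdot> lm = m1 \<cdot> fQ" "pr2 \<cdot> lm = kS \<cdot> gQ" by blast
  have "\<exists>lm'. lm' \<in> hom C Q P \<and> pr1 \<cdot> lm' = \<mu> \<cdot> fQ \<and> pr2 \<cdot> lm' = pr2 \<cdot> gQ"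
    by (rule pb_exI[OF pbP]) (use fga ma fge' \<mu>a \<mu>e in \<open>simp_all add: hom_iff\<close>)
  then obtain lm' where lm': "lm' \<in> hom C Q P" "pr1 \<cdot> lm' = \<mu> \<cdot> fQ" "pr2 \<cdot> lm' = pr2 \<cdot> gQ" by blast
  note lma = lm(1)[unfolded hom_iff] lm'(1)[unfolded hom_iff]
  note lme = lm(2,3) lm'(2,3) assoc_eq[OF lm(2)] assoc_eq[OF lm(3)] assoc_eq[OF lm'(2)] assoc_eq[OF lm'(3)]
  have kSsg1: "kS \<cdot> sg1 = s0 \<cdot> d0R"
    by (rule jmS) simp_all
  have \<mu>tR: "\<mu> \<cdot> tR = ident C R"
    by (rule jmR) (use \<mu>a tRa \<mu>e tRe ma in simp_all)
  have eqs: "(p \<cdot> lm) \<cdot> sQ = (p \<cdot> lm') \<cdot> sQ"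
  proof -
    have "p \<cdot> (lm \<cdot> sQ) = d0R \<cdot> (pr1 \<cdot> (lm \<cdot> sQ))"
      by (rule gen1) (use lma sQa lme sQe fga ma me' assoc_eq[OF kSsg1] in simp_all)
    also have "\<dots> = d0R \<cdot> m1" using lma sQa lme sQe fga ma by simp
    finally have 1: "p \<cdot> (lm \<cdot> sQ) = d0R \<cdot> m1" .
    have "p \<cdot> (lm' \<cdot> sQ) = d0R \<cdot> (pr1 \<cdot> (lm' \<cdot> sQ))"
      by (rule gen1) (use lma sQa lme sQe fga ma \<mu>a \<mu>e in simp_all)
    also have "\<dots> = d0R \<cdot> m1" using lma sQa lme sQe fga ma \<mu>a \<mu>e by simp
    finally have 2: "p \<cdot> (lm' \<cdot> sQ) = d0R \<cdot> m1" .
    show ?thesis using 1 2 lma sQa by simp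
  qed
  have eqt: "(p \<cdot> lm) \<cdot> tQ = (p \<cdot> lm') \<cdot> tQ"
  proof -
    have "p \<cdot> (lm \<cdot> tQ) = d1S \<cdot> (pr2 \<cdot> (lm \<cdot> tQ))"
      by (rule gen2) (use lma sQa lme sQe fga ma tRa tRe in simp_all)
    also have "\<dots> = p" using lma sQa lme sQe fga ma by simp
    finally have 1: "p \<cdot> (lm \<cdot> tQ) = p" .
    have "lm' \<cdot> tQ = ident C P"
      by (rule pbP_uniq) (use lma sQa lme sQe fga ma \<mu>a tRa assoc_eq[OF \<mu>tR] in simp_all)
    then show ?thesis using 1 lma sQa by simp
  qed
  have main: "p \<cdot> lm = p \<cdot> lm'"
    by (rule extremal_eq[OF fc jeeQ _ _ _ eqs eqt]) (use lma sQa in \<open>simp_all add: hom_iff\<close>)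
  show "\<forall>T\<in>Obj C. \<forall>x\<in>hom C T X. \<forall>y\<in>hom C T X. \<forall>z\<in>hom C T X. \<forall>t\<in>hom C T X. \<forall>r1 r2 s.
        witnesses C R d0R d1R T x y r1 \<longrightarrow> witnesses C R d0R d1R T y z r2 \<longrightarrow>
        witnesses C S d0S d1S T z t s \<longrightarrow>
        (\<exists>s' r'. witnesses C S d0S d1S T y (conn_app C P pr1 pr2 p T r2 s) s' \<and>
                 witnesses C R d0R d1R T x z r' \<and>
                 conn_app C P pr1 pr2 p T r1 s' = conn_app C P pr1 pr2 p T r' s)"
  proof (intro ballI allI impI)
    fix T x y z t r1 r2 s
    assume xyzt: "T \<in> Obj C" "x \<in> hom C T X" "y \<in> hom C T X" "z \<in> hom C T X" "t \<in> hom C T X"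
    assume w: "witnesses C R d0R d1R T x y r1" "witnesses C R d0R d1R T y z r2"
      "witnesses C S d0S d1S T z t s"
    note e = elt[OF w(2,3)]
    have ws: "r1 \<in> Arr C" "Dom C r1 = T" "Cod C r1 = R" "r2 \<in> Arr C" "Dom C r2 = T" "Cod C r2 = R"
      "s \<in> Arr C" "Dom C s = T" "Cod C s = S"
      "d0R \<cdot> r1 = x" "d1R \<cdot> r1 = y" "d0R \<cdot> r2 = y" "d1R \<cdot> r2 = z" "d0S \<cdot> s = z" "d1S \<cdot> s = t"
      using w by (auto simp: witnesses_def hom_iff)
    have "\<exists>v. v \<in> hom C T R2 \<and> m1 \<cdot> v = r1 \<and> m2 \<cdot> v = r2"
      by (rule pb_exI[OF pbR2]) (use ws in \<open>simp_all add: hom_iff\<close>)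
    then obtain v where v: "v \<in> hom C T R2" "m1 \<cdot> v = r1" "m2 \<cdot> v = r2" by blast
    note va = v(1)[unfolded hom_iff]
    have "\<exists>m. m \<in> hom C T Q \<and> fQ \<cdot> m = v \<and> gQ \<cdot> m = elt T r2 s"
      by (rule pb_exI[OF pbQ]) (use e v va ma in \<open>simp_all add: hom_iff\<close>)
    then obtain m where m: "m \<in> hom C T Q" "fQ \<cdot> m = v" "gQ \<cdot> m = elt T r2 s" by blast
    note mma = m(1)[unfolded hom_iff]
    define s' where "s' = kS \<cdot> elt T r2 s"
    define r' where "r' = \<mu> \<cdot> v"
    have ws': "witnesses C S d0S d1S T y (conn_app C P pr1 pr2 p T r2 s) s'"
      unfolding s'_def witnesses_def using e ws by (simp add: hom_iff)
    have wr': "witnesses C R d0R d1R T x z r'"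
      unfolding r'_def witnesses_def using ma va v \<mu>a \<mu>e ws by (simp add: hom_iff)
    have c1: "conn_app C P pr1 pr2 p T r1 s' = p \<cdot> (lm \<cdot> m)"
      by (rule conn_app_eq[OF pbP]) (use lma mma lme m v va e fga ma in \<open>simp_all add: hom_iff s'_def\<close>)
    have c2: "conn_app C P pr1 pr2 p T r' s = p \<cdot> (lm' \<cdot> m)"
      by (rule conn_app_eq[OF pbP]) (use lma mma lme m v va e fga ma \<mu>a in \<open>simp_all add: hom_iff r'_def\<close>)
    have "p \<cdot> (lm \<cdot> m) = p \<cdot> (lm' \<cdot> m)"
      using main lma mma assoc[of m lm p] assoc[of m lm' p] by simp
    then show "\<exists>s' r'. witnesses C S d0S d1S T y (conn_app C P pr1 pr2 p T r2 s) s' \<and>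
                 witnesses C R d0R d1R T x z r' \<and>
                 conn_app C P pr1 pr2 p T r1 s' = conn_app C P pr1 pr2 p T r' s"
      using ws' wr' c1 c2 by metis
  qed
qed

end

theorem proposition3p7:
  fixes C :: "('o, 'a, 'e) cat_scheme" and \<Sigma> :: "('a \<times> 'a) set"
  assumes cat: "category C"
    and fc: "finitely_complete C"
    and fib: "fibrational C \<Sigma>"
    and malt: "sigma_maltsev C \<Sigma>"
    and Rrel: "reflexive_relation C X R d0R d1R r0"
    and Srel: "sigma_relation C \<Sigma> X S d0S d1S s0"
    and conn: "is_connector C X R d0R d1R r0 S d0S d1S s0 P pr1 pr2 p"
  shows
    "(\<forall>T\<in>Obj C. \<forall>x\<in>hom C T X. \<forall>y\<in>hom C T X. \<forall>z\<in>hom C T X. \<forall>r s.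
        witnesses C R d0R d1R T x y r \<longrightarrow> witnesses C S d0S d1S T y z s \<longrightarrow>
        relates C S d0S d1S T x (conn_app C P pr1 pr2 p T r s) \<and>
        relates C R d0R d1R T (conn_app C P pr1 pr2 p T r s) z)
   \<and> (\<forall>T\<in>Obj C. \<forall>x\<in>hom C T X. \<forall>y\<in>hom C T X. \<forall>z\<in>hom C T X. \<forall>t\<in>hom C T X. \<forall>r s1 s2.
        witnesses C R d0R d1R T x y r \<longrightarrow> witnesses C S d0S d1S T y z s1 \<longrightarrow>
        witnesses C S d0S d1S T z t s2 \<longrightarrow>
        (\<exists>r' s'. witnesses C R d0R d1R T (conn_app C P pr1 pr2 p T r s1) z r' \<and>
                 witnesses C S d0S d1S T y t s' \<and>
                 conn_app C P pr1 pr2 p T r' s2 = conn_app C P pr1 pr2 p T r s'))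
   \<and> (preorder_rel C X R d0R d1R r0 \<longrightarrow>
      (\<forall>T\<in>Obj C. \<forall>x\<in>hom C T X. \<forall>y\<in>hom C T X. \<forall>z\<in>hom C T X. \<forall>t\<in>hom C T X. \<forall>r1 r2 s.
        witnesses C R d0R d1R T x y r1 \<longrightarrow> witnesses C R d0R d1R T y z r2 \<longrightarrow>
        witnesses C S d0S d1S T z t s \<longrightarrow>
        (\<exists>s' r'. witnesses C S d0S d1S T y (conn_app C P pr1 pr2 p T r2 s) s' \<and>
                 witnesses C R d0R d1R T x z r' \<and>
                 conn_app C P pr1 pr2 p T r1 s' = conn_app C P pr1 pr2 p T r' s)))"
  proof -
  have "setting C \<Sigma> X R d0R d1R r0 S d0S d1S s0 P pr1 pr2 p"
    using assms by (simp add: setting_def setting_axioms_def cctx_def)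
  then interpret st: setting C \<Sigma> X R d0R d1R r0 S d0S d1S s0 P pr1 pr2 p .
  show ?thesis using st.part1 st.part2 st.part3 by blast
qed

end
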